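(* For parameters $a>0$, $b>0$, $L>0$, call a barrier a pair $(\phi,\psi)$ solving $$-\phi''=\phi(1-\phi-a\psi),\quad -\psi''=\psi(1-b\phi-\psi)\ \text{ in }(0,L),\qquad \phi(0)=\phi(L)=0,\ \psi(0)=\psi(L)=1,$$ with $0<\phi(x)<1$ and $0<\psi(x)<1$ for all $x\in(0,L)$. Suppose a barrier exists for the parameters $\bar a,\bar b,\bar L$ (with $\bar a>0$, $\bar b>\max\{\bar a,1\}$, $\bar L>0$). Then: 1. for all $L\ge\bar L$ a barrier exists for the parameters $\bar a,\bar b,L$; 2. for all $b\ge\bar b$ a barrier exists for the parameters $\bar a,b,\bar L$; 3. for all $a\le\bar a$ (with $a>0$) a barrier exists for the parameters $a,\bar b,\bar L$. *)

theory Defs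
  imports "HOL-Analysis.Analysis"
begin

definition barrier :: "real \<Rightarrow> real \<Rightarrow> real \<Rightarrow> (real \<Rightarrow> real) \<Rightarrow> (real \<Rightarrow> real) \<Rightarrow> bool" where
  "barrier a b L \<phi> \<psi> \<longleftrightarrow>
     continuous_on {0..L} \<phi> \<and> continuous_on {0..L} \<psi> \<and>
     (\<exists>\<phi>' \<psi>' \<phi>'' \<psi>''.
        (\<forall>x\<in>{0<..<L}.
           (\<phi> has_real_derivative \<phi>' x) (at x) \<and>
           (\<psi> has_real_derivative \<psi>' x) (at x) \<and>
           (\<phi>' has_real_derivative \<phi>'' x) (at x) \<and>
           (\<psi>' has_real_derivative \<psi>'' x) (at x) \<and>
           - \<phi>'' x = \<phi> x * (1 - \<phi> x - a * \<psi> x) \<and>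
           - \<psi>'' x = \<psi> x * (1 - b * \<phi> x - \<psi> x))) \<and>
     \<phi> 0 = 0 \<and> \<phi> L = 0 \<and> \<psi> 0 = 1 \<and> \<psi> L = 1 \<and>
     (\<forall>x\<in>{0<..<L}. 0 < \<phi> x \<and> \<phi> x < 1 \<and> 0 < \<psi> x \<and> \<psi> x < 1)"

definition barrier_exists :: "real \<Rightarrow> real \<Rightarrow> real \<Rightarrow> bool" where
  "barrier_exists a b L \<longleftrightarrow> (\<exists>\<phi> \<psi>. barrier a b L \<phi> \<psi>)"

end

theory Submission
  imports Defs
begin


definition IA :: "real \<Rightarrow> (real \<Rightarrow> real) \<Rightarrow> real \<Rightarrow> real" where
  "IA k g x = integral {0..x} (\<lambda>s. sinh (k * s) * g s)"
definition IB :: "real \<Rightarrow> real \<Rightarrow> (real \<Rightarrow> real) \<Rightarrow> real \<Rightarrow> real" where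
  "IB k L g x = integral {0..x} (\<lambda>s. sinh (k * (L-s)) * g s)"
definition S0 :: "real \<Rightarrow> real \<Rightarrow> (real \<Rightarrow> real) \<Rightarrow> real \<Rightarrow> real" where
  "S0 k L g x = (sinh (k * (L-x)) * IA k g x + sinh (k * x) * (IB k L g L - IB k L g x)) / (k * sinh (k * L))"
definition S0d :: "real \<Rightarrow> real \<Rightarrow> (real \<Rightarrow> real) \<Rightarrow> real \<Rightarrow> real" where
  "S0d k L g x = (- k * cosh (k * (L-x)) * IA k g x + k * cosh (k * x) * (IB k L g L - IB k L g x)) / (k * sinh (k * L))"

lemma IA_deriv:
  assumes "continuous_on {0..L} g" "x \<in> {0<..<L}"
  shows "(IA k g has_real_derivative sinh (k * x) * g x) (at x)"
proof -
  have c: "continuous_on {0..L} (\<lambda>s. sinh (k * s) * g s)"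
    by (intro continuous_intros assms)
  have "((\<lambda>x. integral {0..x} (\<lambda>s. sinh (k * s) * g s)) has_real_derivative sinh (k * x) * g x) (at x within {0..L})"
    using integral_has_real_derivative[OF c, of x] assms by auto
  moreover have "at x within {0..L} = at x" using assms by (intro at_within_interior) auto
  ultimately show ?thesis unfolding IA_def[abs_def] by simp
qed

lemma IB_deriv:
  assumes "continuous_on {0..L} g" "x \<in> {0<..<L}"
  shows "(IB k L g has_real_derivative sinh (k * (L-x)) * g x) (at x)"
proof -
  have c: "continuous_on {0..L} (\<lambda>s. sinh (k * (L-s)) * g s)"
    by (intro continuous_intros assms)
  have "((\<lambda>x. integral {0..x} (\<lambda>s. sinh (k * (L-s)) * g s)) has_real_derivative sinh (k * (L-x)) * g x) (at x within {0..L})"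
    using integral_has_real_derivative[OF c, of x] assms by auto
  moreover have "at x within {0..L} = at x" using assms by (intro at_within_interior) auto
  ultimately show ?thesis unfolding IB_def[abs_def] by simp
qed

lemma sinh_wronski: "cosh (k * (L-x)) * sinh (k * x) + cosh (k * x) * sinh (k * (L-x)) = sinh (k * (L::real))"
proof -
  have "sinh (k * x + k * (L-x)) = sinh (k * x) * cosh (k * (L-x)) + cosh (k * x) * sinh (k * (L-x))"
    by (rule sinh_add)
  moreover have "k * x + k * (L-x) = k * L" by (simp add: algebra_simps)
  ultimately show ?thesis by (simp add: mult.commute)
qed

lemma S0_deriv:
  assumes "continuous_on {0..L} g" "x \<in> {0<..<L}"
  shows "(S0 k L g has_real_derivative S0d k L g x) (at x)"
proof -
  note d1 = IA_deriv[OF assms(1,2), of k] and d2 = IB_deriv[OF assms(1,2), of k]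
  have "((\<lambda>x. sinh (k * (L-x)) * IA k g x + sinh (k * x) * (IB k L g L - IB k L g x)) has_real_derivative
     (- k * cosh (k * (L-x)) * IA k g x + k * cosh (k * x) * (IB k L g L - IB k L g x))) (at x)"
    apply (rule DERIV_cong)
     apply (rule derivative_eq_intros d1 d2 refl)+
    apply (simp add: algebra_simps)
    done
  from DERIV_cdivide[OF this, of "k * sinh (k * L)"] show ?thesis
    unfolding S0_def[abs_def] S0d_def by simp
qed

lemma S0d_deriv:
  assumes "continuous_on {0..L} g" "x \<in> {0<..<L}" "k > 0" "L > 0"
  shows "(S0d k L g has_real_derivative (k^2 * S0 k L g x - g x)) (at x)"
proof -
  note d1 = IA_deriv[OF assms(1,2), of k] and d2 = IB_deriv[OF assms(1,2), of k]
  have sp: "sinh (k * L) > 0" using assms by simp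
  have "((\<lambda>x. - k * cosh (k * (L-x)) * IA k g x + k * cosh (k * x) * (IB k L g L - IB k L g x)) has_real_derivative
     (k^2 * (sinh (k * (L-x)) * IA k g x + sinh (k * x) * (IB k L g L - IB k L g x)) - k * sinh (k * L) * g x)) (at x)"
    apply (rule DERIV_cong)
     apply (rule derivative_eq_intros d1 d2 refl)+
    using sinh_wronski[of k L x]
    apply (simp add: algebra_simps power2_eq_square)
    apply (simp add: distrib_left[symmetric])
    done
  from DERIV_cdivide[OF this, of "k * sinh (k * L)"] show ?thesis
    unfolding S0_def S0d_def[abs_def] using sp assms by (simp add: field_simps power2_eq_square)
qed



lemma maxp:
  fixes w w' w'' :: "real \<Rightarrow> real"
  assumes "continuous_on {\<alpha>..\<beta>} w" "K > 0"
    "\<forall>x\<in>{\<alpha><..<\<beta>}. (w has_real_derivative w' x) (at x) \<and> (w' has_real_derivative w'' x) (at x) \<and> w'' x \<le> K * w x"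
    "w \<alpha> \<ge> 0" "w \<beta> \<ge> 0"
  shows "\<forall>x\<in>{\<alpha>..\<beta>}. w x \<ge> 0"
proof (rule ccontr)
  assume "\<not> ?thesis"
  then obtain x1 where x1: "x1 \<in> {\<alpha>..\<beta>}" "w x1 < 0" by auto
  obtain x0 where x0: "x0 \<in> {\<alpha>..\<beta>}" "\<forall>y\<in>{\<alpha>..\<beta>}. w x0 \<le> w y"
    using continuous_attains_inf[of "{\<alpha>..\<beta>}" w] assms(1) x1 by auto
  have neg: "w x0 < 0" using x0 x1 by force
  have in0: "x0 \<in> {\<alpha><..<\<beta>}" using x0(1) neg assms(4,5)
    by (metis greaterThanLessThan_iff atLeastAtMost_iff le_less not_le)
  then have d: "(w has_real_derivative w' x0) (at x0)" "(w' has_real_derivative w'' x0) (at x0)"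
     "w'' x0 \<le> K * w x0" using assms(3) by auto
  define d0 where "d0 = min (x0 - \<alpha>) (\<beta> - x0)"
  have d0: "d0 > 0" using in0 by (auto simp: d0_def)
  have "w' x0 = 0"
  proof (rule DERIV_local_min[OF d(1) d0], intro allI impI)
    fix y assume "\<bar>x0 - y\<bar> < d0"
    then have "y \<in> {\<alpha>..\<beta>}" by (auto simp: d0_def abs_if split: if_splits)
    then show "w x0 \<le> w y" using x0 by auto
  qed
  have "w'' x0 < 0" using d(3) neg assms(2) by (smt (verit) mult_pos_neg)
  from DERIV_neg_dec_left[OF d(2) this] obtain e where e: "e > 0" "\<forall>h>0. h < e \<longrightarrow> w' x0 < w' (x0 - h)"
    by auto
  define h0 where "h0 = min e d0 / 2"
  have h0: "h0 > 0" "h0 < e" "h0 < d0" using e d0 by (auto simp: h0_def)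
  obtain z where z: "x0 - h0 < z" "z < x0" "w x0 - w (x0 - h0) = (x0 - (x0 - h0)) * w' z"
  proof -
    have "\<exists>z. x0 - h0 < z \<and> z < x0 \<and> w x0 - w (x0 - h0) = (x0 - (x0 - h0)) * w' z"
    proof (rule MVT2)
      show "x0 - h0 < x0" using h0 by simp
      fix x assume "x0 - h0 \<le> x" "x \<le> x0"
      then have "x \<in> {\<alpha><..<\<beta>}" using h0 in0 by (auto simp: d0_def)
      then show "(w has_real_derivative w' x) (at x)" using assms(3) by auto
    qed
    then show ?thesis using that by blast
  qed
  have "w' z > 0"
    using e(2)[rule_format, of "x0 - z"] z h0 \<open>w' x0 = 0\<close> by auto
  then have "w x0 > w (x0 - h0)" using z h0 by (smt (verit) mult_pos_pos)
  moreover have "x0 - h0 \<in> {\<alpha>..\<beta>}" using h0 in0 by (auto simp: d0_def)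
  ultimately show False using x0 by force
qed



definition Hf :: "real \<Rightarrow> real \<Rightarrow> real \<Rightarrow> real" where
  "Hf k L x = (sinh (k * x) + sinh (k * (L - x))) / sinh (k * L)"
definition Hd :: "real \<Rightarrow> real \<Rightarrow> real \<Rightarrow> real" where
  "Hd k L x = (k * cosh (k * x) - k * cosh (k * (L - x))) / sinh (k * L)"

lemma Hf_deriv: "(Hf k L has_real_derivative Hd k L x) (at x)"
proof -
  have "((\<lambda>x. sinh (k * x) + sinh (k * (L - x))) has_real_derivative (k * cosh (k * x) - k * cosh (k * (L - x)))) (at x)"
    by (rule DERIV_cong, (rule derivative_eq_intros refl)+, simp add: algebra_simps)
  from DERIV_cdivide[OF this, of "sinh (k * L)"] show ?thesis unfolding Hf_def[abs_def] Hd_def by simp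
qed

lemma Hd_deriv: "(Hd k L has_real_derivative k^2 * Hf k L x) (at x)"
proof -
  have "((\<lambda>x. k * cosh (k * x) - k * cosh (k * (L - x))) has_real_derivative k^2 * (sinh (k * x) + sinh (k * (L - x)))) (at x)"
    by (rule DERIV_cong, (rule derivative_eq_intros refl)+, simp add: algebra_simps power2_eq_square)
  from DERIV_cdivide[OF this, of "sinh (k * L)"] show ?thesis unfolding Hf_def Hd_def[abs_def] by simp
qed

lemma Hf_cont: "continuous_on S (Hf k L)"
  unfolding Hf_def[abs_def] divide_inverse by (intro continuous_intros)

lemma Hf_pos: assumes "k > 0" "L > 0" "x \<in> {0..L}" shows "Hf k L x > 0"
proof -
  have "sinh (k * x) \<ge> 0" "sinh (k * (L - x)) \<ge> 0" using assms by auto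
  moreover have "sinh (k * x) > 0 \<or> sinh (k * (L - x)) > 0"
  proof (cases "x > 0")
    case True then show ?thesis using assms by auto
  next
    case False then have "x = 0" using assms by auto
    then show ?thesis using assms by auto
  qed
  moreover have "sinh (k * L) > 0" using assms by auto
  ultimately have "sinh (k * x) + sinh (k * (L - x)) > 0" "sinh (k * L) > 0" by linarith+
  then show ?thesis unfolding Hf_def by (intro divide_pos_pos)
qed

lemma Hf_0: "k > 0 \<Longrightarrow> L > 0 \<Longrightarrow> Hf k L 0 = 1" and Hf_L: "k > 0 \<Longrightarrow> L > 0 \<Longrightarrow> Hf k L L = 1"
  unfolding Hf_def by auto

lemma S0_0: "S0 k L g 0 = 0" and S0_L: "S0 k L g L = 0"
  unfolding S0_def IA_def IB_def by auto

lemma S0_cont: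
  assumes "(\<lambda>s. sinh (k * s) * g s) integrable_on {0..L}" "(\<lambda>s. sinh (k * (L - s)) * g s) integrable_on {0..L}"
  shows "continuous_on {0..L} (S0 k L g)"
proof -
  have "continuous_on {0..L} (IA k g)" unfolding IA_def[abs_def]
    by (rule indefinite_integral_continuous_1[OF assms(1)])
  moreover have "continuous_on {0..L} (IB k L g)" unfolding IB_def[abs_def]
    by (rule indefinite_integral_continuous_1[OF assms(2)])
  ultimately show ?thesis unfolding S0_def[abs_def] divide_inverse by (intro continuous_intros)
qed

lemma S0_cont':
  assumes "continuous_on {0..L} g" shows "continuous_on {0..L} (S0 k L g)"
  by (rule S0_cont; intro integrable_continuous_real continuous_intros assms)

lemma S0_alt:
  assumes "continuous_on {0..L} g" "x \<in> {0..L}"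
  shows "S0 k L g x = (sinh (k * (L - x)) * integral {0..x} (\<lambda>s. sinh (k * s) * g s)
      + sinh (k * x) * integral {x..L} (\<lambda>s. sinh (k * (L - s)) * g s)) / (k * sinh (k * L))"
proof -
  have "(\<lambda>s. sinh (k * (L - s)) * g s) integrable_on {0..L}"
    by (intro integrable_continuous_real continuous_intros assms)
  from Henstock_Kurzweil_Integration.integral_combine[OF _ _ this, of x] assms(2)
  have "IB k L g L - IB k L g x = integral {x..L} (\<lambda>s. sinh (k * (L - s)) * g s)"
    unfolding IB_def by auto
  then show ?thesis unfolding S0_def IA_def by simp
qed

lemma S0_diff:
  assumes "continuous_on {0..L} g1" "continuous_on {0..L} g2" "x \<in> {0..L}"
  shows "S0 k L (\<lambda>s. g1 s - g2 s) x = S0 k L g1 x - S0 k L g2 x"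
proof -
  have c: "continuous_on {0..L} (\<lambda>s. g1 s - g2 s)" using assms by (intro continuous_intros)
  have i1: "(\<lambda>s. sinh (k * s) * g1 s) integrable_on {0..x}" "(\<lambda>s. sinh (k * s) * g2 s) integrable_on {0..x}"
    "(\<lambda>s. sinh (k * (L - s)) * g1 s) integrable_on {x..L}" "(\<lambda>s. sinh (k * (L - s)) * g2 s) integrable_on {x..L}"
    using assms by (auto intro!: integrable_continuous_real continuous_intros elim!: continuous_on_subset)
  have e1: "integral {0..x} (\<lambda>s. sinh (k * s) * (g1 s - g2 s)) = integral {0..x} (\<lambda>s. sinh (k * s) * g1 s) - integral {0..x} (\<lambda>s. sinh (k * s) * g2 s)"
    using integral_diff[OF i1(1,2)] by (simp add: right_diff_distrib)
  have e2: "integral {x..L} (\<lambda>s. sinh (k * (L - s)) * (g1 s - g2 s)) = integral {x..L} (\<lambda>s. sinh (k * (L - s)) * g1 s) - integral {x..L} (\<lambda>s. sinh (k * (L - s)) * g2 s)"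
    using integral_diff[OF i1(3,4)] by (simp add: right_diff_distrib)
  show ?thesis
    unfolding S0_alt[OF c assms(3)] S0_alt[OF assms(1,3)] S0_alt[OF assms(2,3)] e1 e2
    apply (subst diff_divide_distrib[symmetric])
    apply (rule arg_cong[where f="\<lambda>t. t / _"])
    by (simp add: algebra_simps)
qed

lemma S0_nonneg:
  assumes "continuous_on {0..L} g" "x \<in> {0..L}" "k > 0" "L > 0" "\<And>s. s \<in> {0..L} \<Longrightarrow> g s \<ge> 0"
  shows "S0 k L g x \<ge> 0"
proof -
  have "integral {0..x} (\<lambda>s. sinh (k * s) * g s) \<ge> 0"
    using assms by (intro integral_nonneg) (auto intro!: integrable_continuous_real continuous_intros elim!: continuous_on_subset)
  moreover have "integral {x..L} (\<lambda>s. sinh (k * (L - s)) * g s) \<ge> 0"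
    using assms by (intro integral_nonneg) (auto intro!: integrable_continuous_real continuous_intros elim!: continuous_on_subset)
  ultimately show ?thesis unfolding S0_alt[OF assms(1,2)] using assms
    by (auto intro!: divide_nonneg_pos)
qed

lemma S0_pos:
  assumes "continuous_on {0..L} g" "x \<in> {0<..<L}" "k > 0" "L > 0" "\<And>s. s \<in> {0..L} \<Longrightarrow> g s \<ge> 0"
    "s0 \<in> {0<..<L}" "g s0 > 0"
  shows "S0 k L g x > 0"
proof -
  have x: "x \<in> {0..L}" using assms by auto
  have I1: "integral {0..x} (\<lambda>s. sinh (k * s) * g s) \<ge> 0"
    using assms by (intro integral_nonneg) (auto intro!: integrable_continuous_real continuous_intros elim!: continuous_on_subset)
  have I2: "integral {x..L} (\<lambda>s. sinh (k * (L - s)) * g s) \<ge> 0"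
    using assms by (intro integral_nonneg) (auto intro!: integrable_continuous_real continuous_intros elim!: continuous_on_subset)
  have sp: "sinh (k * L) > 0" "sinh (k * x) > 0" "sinh (k * (L - x)) > 0" using assms by auto
  show ?thesis
  proof (cases "s0 \<le> x")
    case True
    have "integral {0..x} (\<lambda>s. sinh (k * s) * g s) \<noteq> 0"
    proof
      assume "integral {0..x} (\<lambda>s. sinh (k * s) * g s) = 0"
      moreover have "continuous_on {0..x} (\<lambda>s. sinh (k * s) * g s)"
        using assms by (auto intro!: continuous_intros elim!: continuous_on_subset)
      ultimately have "\<forall>s\<in>{0..x}. sinh (k * s) * g s = 0"
        using integral_eq_0_iff[of 0 x "\<lambda>s. sinh (k * s) * g s"] assms by auto
      moreover have "s0 \<in> {0..x}" using True assms by auto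
      ultimately have "sinh (k * s0) * g s0 = 0" by blast
      then show False using assms by auto
    qed
    then have "integral {0..x} (\<lambda>s. sinh (k * s) * g s) > 0" using I1 by auto
    then have "sinh (k * (L - x)) * integral {0..x} (\<lambda>s. sinh (k * s) * g s) > 0" using sp by auto
    moreover have "sinh (k * x) * integral {x..L} (\<lambda>s. sinh (k * (L - s)) * g s) \<ge> 0" using sp I2 by auto
    ultimately show ?thesis unfolding S0_alt[OF assms(1) x] using sp assms by (auto intro!: divide_pos_pos)
  next
    case False
    have "integral {x..L} (\<lambda>s. sinh (k * (L - s)) * g s) \<noteq> 0"
    proof
      assume "integral {x..L} (\<lambda>s. sinh (k * (L - s)) * g s) = 0"
      moreover have "continuous_on {x..L} (\<lambda>s. sinh (k * (L - s)) * g s)"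
        using assms by (auto intro!: continuous_intros elim!: continuous_on_subset)
      ultimately have "\<forall>s\<in>{x..L}. sinh (k * (L - s)) * g s = 0"
        using integral_eq_0_iff[of x L "\<lambda>s. sinh (k * (L - s)) * g s"] assms by auto
      moreover have "s0 \<in> {x..L}" using False assms by auto
      ultimately have "sinh (k * (L - s0)) * g s0 = 0" by blast
      then show False using assms by auto
    qed
    then have "integral {x..L} (\<lambda>s. sinh (k * (L - s)) * g s) > 0" using I2 by auto
    then have "sinh (k * x) * integral {x..L} (\<lambda>s. sinh (k * (L - s)) * g s) > 0" using sp by auto
    moreover have "sinh (k * (L - x)) * integral {0..x} (\<lambda>s. sinh (k * s) * g s) \<ge> 0" using sp I1 by auto
    ultimately show ?thesis unfolding S0_alt[OF assms(1) x] using sp assms by (auto intro!: divide_pos_pos)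
  qed
qed



lemma S0_const:
  assumes "k > 0" "L > 0" "x \<in> {0..L}"
  shows "S0 k L (\<lambda>_. k^2) x = 1 - Hf k L x"
proof -
  define u where "u = (\<lambda>x. S0 k L (\<lambda>_. k^2) x + Hf k L x - 1)"
  define u' where "u' = (\<lambda>x. S0d k L (\<lambda>_. k^2) x + Hd k L x)"
  define u'' where "u'' = (\<lambda>x. k^2 * u x)"
  have cg: "continuous_on {0..L} (\<lambda>_::real. k^2)" by simp
  have cu: "continuous_on {0..L} u" unfolding u_def
    by (intro continuous_intros S0_cont' cg Hf_cont)
  have D: "(u has_real_derivative u' y) (at y) \<and> (u' has_real_derivative u'' y) (at y)"
    if y: "y \<in> {0<..<L}" for y
  proof
    show "(u has_real_derivative u' y) (at y)" unfolding u_def u'_def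
      by (rule DERIV_cong, (rule S0_deriv[OF cg y] Hf_deriv derivative_eq_intros refl)+, (simp)?)
    have "(u' has_real_derivative (k^2 * S0 k L (\<lambda>_. k^2) y - k^2) + k^2 * Hf k L y) (at y)"
      unfolding u'_def by (rule DERIV_cong, (rule S0d_deriv[OF cg y assms(1,2)] Hd_deriv derivative_eq_intros refl)+, (simp)?)
    then show "(u' has_real_derivative u'' y) (at y)" unfolding u''_def u_def
      by (simp add: algebra_simps)
  qed
  have b0: "u 0 = 0" "u L = 0" unfolding u_def using assms by (auto simp: S0_0 S0_L Hf_0 Hf_L)
  have kp: "k^2 > 0" using assms by simp
  have "\<forall>x\<in>{0..L}. u x \<ge> 0"
    by (rule maxp[OF cu kp, of u' u'']) (use D b0 in \<open>auto simp: u''_def\<close>)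
  moreover have "\<forall>x\<in>{0..L}. - u x \<ge> 0"
  proof (rule maxp[of 0 L "\<lambda>x. - u x" "k^2" "\<lambda>x. - u' x" "\<lambda>x. - u'' x"])
    show "continuous_on {0..L} (\<lambda>x. - u x)" using cu by (intro continuous_intros)
    show "\<forall>x\<in>{0<..<L}. ((\<lambda>x. - u x) has_real_derivative - u' x) (at x) \<and>
        ((\<lambda>x. - u' x) has_real_derivative - u'' x) (at x) \<and> - u'' x \<le> k\<^sup>2 * - u x"
      using D by (auto intro!: derivative_intros simp: u''_def)
  qed (use kp b0 in auto)
  ultimately have "u x = 0" using assms by force
  then show ?thesis unfolding u_def by simp
qed

lemma S0_ode:
  assumes "continuous_on {0..L} g" "x \<in> {0<..<L}" "k > 0" "L > 0"
  shows "(S0 k L g has_real_derivative S0d k L g x) (at x)"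
    "(S0d k L g has_real_derivative (k^2 * S0 k L g x - g x)) (at x)"
  using S0_deriv[OF assms(1,2)] S0d_deriv[OF assms] by auto

lemma int_lim:
  fixes f :: "nat \<Rightarrow> real \<Rightarrow> real"
  assumes "\<And>n. continuous_on {a..b} (f n)" "\<And>n s. s \<in> {a..b} \<Longrightarrow> \<bar>f n s\<bar> \<le> M"
    "\<And>s. s \<in> {a..b} \<Longrightarrow> (\<lambda>n. f n s) \<longlonglongrightarrow> f0 s"
  shows "f0 integrable_on {a..b}" "(\<lambda>n. integral {a..b} (f n)) \<longlonglongrightarrow> integral {a..b} f0"
  using dominated_convergence[of f "{a..b}" "\<lambda>_. M" f0] assms
  by (auto intro: integrable_continuous_real)

lemma S0_lim:
  fixes g :: "nat \<Rightarrow> real \<Rightarrow> real"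
  assumes "k > 0" "L > 0" "\<And>n. continuous_on {0..L} (g n)" "\<And>n s. s \<in> {0..L} \<Longrightarrow> \<bar>g n s\<bar> \<le> M"
    "\<And>s. s \<in> {0..L} \<Longrightarrow> (\<lambda>n. g n s) \<longlonglongrightarrow> g0 s"
  shows "continuous_on {0..L} (S0 k L g0)" "\<And>x. x \<in> {0..L} \<Longrightarrow> (\<lambda>n. S0 k L (g n) x) \<longlonglongrightarrow> S0 k L g0 x"
proof -
  have bA: "\<bar>sinh (k * s) * g n s\<bar> \<le> sinh (k * L) * M" if "s \<in> {0..L}" for n s
  proof -
    have "\<bar>sinh (k * s)\<bar> \<le> sinh (k * L)" using that assms by auto
    then show ?thesis unfolding abs_mult using assms(4)[OF that, of n] assms(1,2)
      by (intro mult_mono) auto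
  qed
  have bB: "\<bar>sinh (k * (L - s)) * g n s\<bar> \<le> sinh (k * L) * M" if "s \<in> {0..L}" for n s
  proof -
    have "\<bar>sinh (k * (L - s))\<bar> \<le> sinh (k * L)" using that assms by auto
    then show ?thesis unfolding abs_mult using assms(4)[OF that, of n] assms(1,2)
      by (intro mult_mono) auto
  qed
  have LA: "(\<lambda>s. sinh (k * s) * g0 s) integrable_on {0..x} \<and>
     (\<lambda>n. IA k (g n) x) \<longlonglongrightarrow> IA k g0 x" if "x \<in> {0..L}" for x
  proof -
    have c: "\<And>n. continuous_on {0..x} (\<lambda>s. sinh (k * s) * g n s)"
      using that by (intro continuous_intros continuous_on_subset[OF assms(3)]) auto
    have l: "\<And>s. s \<in> {0..x} \<Longrightarrow> (\<lambda>n. sinh (k * s) * g n s) \<longlonglongrightarrow> sinh (k * s) * g0 s"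
      using assms that by (auto intro!: tendsto_intros)
    have b: "\<And>n s. s \<in> {0..x} \<Longrightarrow> \<bar>sinh (k * s) * g n s\<bar> \<le> sinh (k * L) * M"
      using bA that by auto
    from int_lim[OF c b l] show ?thesis unfolding IA_def by auto
  qed
  have LB: "(\<lambda>s. sinh (k * (L - s)) * g0 s) integrable_on {0..x} \<and>
     (\<lambda>n. IB k L (g n) x) \<longlonglongrightarrow> IB k L g0 x" if "x \<in> {0..L}" for x
  proof -
    have c: "\<And>n. continuous_on {0..x} (\<lambda>s. sinh (k * (L - s)) * g n s)"
      using that by (intro continuous_intros continuous_on_subset[OF assms(3)]) auto
    have l: "\<And>s. s \<in> {0..x} \<Longrightarrow> (\<lambda>n. sinh (k * (L - s)) * g n s) \<longlonglongrightarrow> sinh (k * (L - s)) * g0 s"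
      using assms that by (auto intro!: tendsto_intros)
    have b: "\<And>n s. s \<in> {0..x} \<Longrightarrow> \<bar>sinh (k * (L - s)) * g n s\<bar> \<le> sinh (k * L) * M"
      using bB that by auto
    from int_lim[OF c b l] show ?thesis unfolding IB_def by auto
  qed
  show "continuous_on {0..L} (S0 k L g0)"
    using LA[of L] LB[of L] assms by (intro S0_cont) auto
  show "(\<lambda>n. S0 k L (g n) x) \<longlonglongrightarrow> S0 k L g0 x" if "x \<in> {0..L}" for x
    unfolding S0_def using LA[OF that] LB[OF that] LB[of L] assms
    by (auto intro!: tendsto_intros)
qed



lemma F_mono:
  fixes a K p q p' q' :: real
  assumes "a > 0" "K \<ge> a + 1" "0 \<le> p" "p \<le> p'" "p' \<le> 1" "0 \<le> q'" "q' \<le> q" "q \<le> 1"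
  shows "p * (1 - p - a * q) + K * p \<le> p' * (1 - p' - a * q') + K * p'"
proof -
  have "p' * (1 - p' - a * q') + K * p' - (p * (1 - p - a * q) + K * p)
      = (p' - p) * (1 + K - p' - p - a * q) + a * p' * (q - q')"
    by (simp add: algebra_simps)
  moreover have "(p' - p) * (1 + K - p' - p - a * q) \<ge> 0"
  proof -
    have "a * q \<le> a" using assms by (simp add: mult_left_le)
    then have "0 \<le> 1 + K - p' - p - a * q" "0 \<le> p' - p" using assms by linarith+
    then show ?thesis by simp
  qed
  moreover have "a * p' * (q - q') \<ge> 0" using assms by auto
  ultimately show ?thesis by linarith
qed

lemma G_mono:
  fixes b K p q p' q' :: real
  assumes "b > 0" "K \<ge> b + 1" "0 \<le> p" "p \<le> p'" "p' \<le> 1" "0 \<le> q'" "q' \<le> q" "q \<le> 1"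
  shows "q' * (1 - b * p' - q') + K * q' \<le> q * (1 - b * p - q) + K * q"
proof -
  have "q * (1 - b * p - q) + K * q - (q' * (1 - b * p' - q') + K * q')
      = (q - q') * (1 + K - q - q' - b * p) + b * q' * (p' - p)"
    by (simp add: algebra_simps)
  moreover have "(q - q') * (1 + K - q - q' - b * p) \<ge> 0"
  proof -
    have "b * p \<le> b" using assms by (simp add: mult_left_le)
    then have "0 \<le> 1 + K - q - q' - b * p" "0 \<le> q - q'" using assms by linarith+
    then show ?thesis by simp
  qed
  moreover have "b * q' * (p' - p) \<ge> 0" using assms by auto
  ultimately show ?thesis by linarith
qed

lemma F_bounds:
  fixes a K p q :: real
  assumes "a > 0" "K \<ge> a + 1" "0 \<le> p" "p \<le> 1" "0 \<le> q" "q \<le> 1"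
  shows "0 \<le> p * (1 - p - a * q) + K * p" "p * (1 - p - a * q) + K * p \<le> K"
    "p > 0 \<Longrightarrow> 0 < p * (1 - p - a * q) + K * p"
proof -
  have aq: "a * q \<le> a" using assms by (simp add: mult_left_le)
  have e: "p * (1 - p - a * q) + K * p = p * (1 + K - p - a * q)" by (simp add: algebra_simps)
  have f: "1 + K - p - a * q > 0" using assms aq by linarith
  show "0 \<le> p * (1 - p - a * q) + K * p" unfolding e using assms f by auto
  show "p > 0 \<Longrightarrow> 0 < p * (1 - p - a * q) + K * p" unfolding e using assms f by auto
  have "K - p * (1 + K - p - a * q) = (1 - p) * (K - p) + p * a * q" by (simp add: algebra_simps)
  moreover have "(1 - p) * (K - p) \<ge> 0" using assms by (intro mult_nonneg_nonneg) linarith+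
  moreover have "p * a * q \<ge> 0" using assms by auto
  ultimately show "p * (1 - p - a * q) + K * p \<le> K" unfolding e by linarith
qed

lemma G_bounds:
  fixes b K p q :: real
  assumes "b > 0" "K \<ge> b + 1" "0 \<le> p" "p \<le> 1" "0 \<le> q" "q \<le> 1"
  shows "0 \<le> q * (1 - b * p - q) + K * q" "q * (1 - b * p - q) + K * q \<le> K - b * p"
proof -
  have bp: "b * p \<le> b" using assms by (simp add: mult_left_le)
  have e: "q * (1 - b * p - q) + K * q = q * (1 + K - q - b * p)" by (simp add: algebra_simps)
  have f: "1 + K - q - b * p > 0" using assms bp by linarith
  show "0 \<le> q * (1 - b * p - q) + K * q" unfolding e using assms f by auto
  have "K - b * p - q * (1 + K - q - b * p) = (1 - q) * (K - q - b * p)" by (simp add: algebra_simps)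
  moreover have "(1 - q) * (K - q - b * p) \<ge> 0" using assms bp by (intro mult_nonneg_nonneg) linarith+
  ultimately show "q * (1 - b * p - q) + K * q \<le> K - b * p" unfolding e by linarith
qed



definition Fp :: "real \<Rightarrow> real \<Rightarrow> (real \<Rightarrow> real) \<Rightarrow> (real \<Rightarrow> real) \<Rightarrow> real \<Rightarrow> real" where
  "Fp a K p q s = p s * (1 - p s - a * q s) + K * p s"
definition Gq :: "real \<Rightarrow> real \<Rightarrow> (real \<Rightarrow> real) \<Rightarrow> (real \<Rightarrow> real) \<Rightarrow> real \<Rightarrow> real" where
  "Gq b K p q s = q s * (1 - b * p s - q s) + K * q s"
definition good :: "real \<Rightarrow> (real \<Rightarrow> real) \<Rightarrow> (real \<Rightarrow> real) \<Rightarrow> bool" where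
  "good L p q \<longleftrightarrow> continuous_on {0..L} p \<and> continuous_on {0..L} q \<and>
     (\<forall>x\<in>{0..L}. 0 \<le> p x \<and> p x \<le> 1 \<and> 0 \<le> q x \<and> q x \<le> 1)"
definition T1 :: "real \<Rightarrow> real \<Rightarrow> real \<Rightarrow> (real \<Rightarrow> real) \<Rightarrow> (real \<Rightarrow> real) \<Rightarrow> real \<Rightarrow> real" where
  "T1 a k L p q = S0 k L (Fp a (k^2) p q)"
definition T2 :: "real \<Rightarrow> real \<Rightarrow> real \<Rightarrow> (real \<Rightarrow> real) \<Rightarrow> (real \<Rightarrow> real) \<Rightarrow> real \<Rightarrow> real" where
  "T2 b k L p q = (\<lambda>x. Hf k L x + S0 k L (Gq b (k^2) p q) x)"

lemma Fp_cont: "continuous_on S p \<Longrightarrow> continuous_on S q \<Longrightarrow> continuous_on S (Fp a K p q)"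
  unfolding Fp_def[abs_def] by (intro continuous_intros)
lemma Gq_cont: "continuous_on S p \<Longrightarrow> continuous_on S q \<Longrightarrow> continuous_on S (Gq b K p q)"
  unfolding Gq_def[abs_def] by (intro continuous_intros)

context
  fixes a b k L :: real
  assumes a: "a > 0" and b: "b > 0" and k: "k > 0" "a + 1 \<le> k^2" "b + 1 \<le> k^2" and L: "L > 0"
begin

lemma Fp_b: assumes "good L p q" "x \<in> {0..L}"
  shows "0 \<le> Fp a (k^2) p q x" "Fp a (k^2) p q x \<le> k^2" "p x > 0 \<Longrightarrow> Fp a (k^2) p q x > 0"
  using F_bounds[OF a k(2), of "p x" "q x"] assms unfolding good_def Fp_def by auto

lemma Gq_b: assumes "good L p q" "x \<in> {0..L}"
  shows "0 \<le> Gq b (k^2) p q x" "Gq b (k^2) p q x \<le> k^2 - b * p x"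
  using G_bounds[OF b k(3), of "p x" "q x"] assms unfolding good_def Gq_def by auto

lemma T1_le: assumes "good L p q" "x \<in> {0..L}"
  shows "T1 a k L p q x \<le> 1 - Hf k L x"
proof -
  have c: "continuous_on {0..L} (Fp a (k^2) p q)" using assms unfolding good_def by (intro Fp_cont) auto
  have "S0 k L (\<lambda>s. k^2 - Fp a (k^2) p q s) x \<ge> 0"
    using assms Fp_b[OF assms(1)] k L c by (intro S0_nonneg) (auto intro!: continuous_intros)
  then show ?thesis unfolding T1_def using S0_diff[of L "\<lambda>_. k^2" "Fp a (k^2) p q" x k] c assms
      S0_const[OF k(1) L assms(2)] by auto
qed

lemma T_good: assumes "good L p q" shows "good L (T1 a k L p q) (T2 b k L p q)"
proof -
  have c: "continuous_on {0..L} (Fp a (k^2) p q)" "continuous_on {0..L} (Gq b (k^2) p q)"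
    using assms unfolding good_def by (auto intro!: Fp_cont Gq_cont)
  have "0 \<le> T1 a k L p q x \<and> T1 a k L p q x \<le> 1 \<and> 0 \<le> T2 b k L p q x \<and> T2 b k L p q x \<le> 1"
    if x: "x \<in> {0..L}" for x
  proof (intro conjI)
    show "0 \<le> T1 a k L p q x" unfolding T1_def
      using Fp_b[OF assms] by (intro S0_nonneg c(1) x k L) auto
    show "T1 a k L p q x \<le> 1" using T1_le[OF assms x] Hf_pos[OF k(1) L x] by auto
    have "S0 k L (Gq b (k^2) p q) x \<ge> 0"
      using Gq_b[OF assms] by (intro S0_nonneg c(2) x k L) auto
    then show "0 \<le> T2 b k L p q x" unfolding T2_def using Hf_pos[OF k(1) L x] by auto
    have gk: "Gq b (k^2) p q s \<le> k^2" if "s \<in> {0..L}" for s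
    proof -
      have "b * p s \<ge> 0" using b assms that unfolding good_def by auto
      then show ?thesis using Gq_b(2)[OF assms that] by linarith
    qed
    have "S0 k L (\<lambda>s. k^2 - Gq b (k^2) p q s) x \<ge> 0"
      using gk by (intro S0_nonneg x k L continuous_intros c(2)) auto
    then show "T2 b k L p q x \<le> 1" unfolding T2_def
      using S0_diff[of L "\<lambda>_. k^2" "Gq b (k^2) p q" x k] c x S0_const[OF k(1) L x] by auto
  qed
  then show ?thesis unfolding good_def T1_def T2_def
    using c by (auto intro!: S0_cont' continuous_intros Hf_cont)
qed

lemma T_mono:
  assumes "good L p q" "good L p' q'" "\<And>x. x \<in> {0..L} \<Longrightarrow> p x \<le> p' x \<and> q' x \<le> q x" "x \<in> {0..L}"
  shows "T1 a k L p q x \<le> T1 a k L p' q' x" "T2 b k L p' q' x \<le> T2 b k L p q x"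
proof -
  have c: "continuous_on {0..L} (Fp a (k^2) p q)" "continuous_on {0..L} (Gq b (k^2) p q)"
    "continuous_on {0..L} (Fp a (k^2) p' q')" "continuous_on {0..L} (Gq b (k^2) p' q')"
    using assms unfolding good_def by (auto intro!: Fp_cont Gq_cont)
  have "S0 k L (\<lambda>s. Fp a (k^2) p' q' s - Fp a (k^2) p q s) x \<ge> 0"
  proof (rule S0_nonneg[OF _ assms(4) k(1) L])
    show "continuous_on {0..L} (\<lambda>s. Fp a (k^2) p' q' s - Fp a (k^2) p q s)" using c by (intro continuous_intros)
    fix s assume s: "s \<in> {0..L}"
    show "0 \<le> Fp a (k^2) p' q' s - Fp a (k^2) p q s"
      using F_mono[OF a k(2), of "p s" "p' s" "q' s" "q s"] assms(3)[OF s] assms(1,2) s unfolding good_def Fp_def by auto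
  qed
  then show "T1 a k L p q x \<le> T1 a k L p' q' x" unfolding T1_def using S0_diff[OF c(3,1) assms(4)] by auto
  have "S0 k L (\<lambda>s. Gq b (k^2) p q s - Gq b (k^2) p' q' s) x \<ge> 0"
  proof (rule S0_nonneg[OF _ assms(4) k(1) L])
    show "continuous_on {0..L} (\<lambda>s. Gq b (k^2) p q s - Gq b (k^2) p' q' s)" using c by (intro continuous_intros)
    fix s assume s: "s \<in> {0..L}"
    show "0 \<le> Gq b (k^2) p q s - Gq b (k^2) p' q' s"
      using G_mono[OF b k(3), of "p s" "p' s" "q' s" "q s"] assms(3)[OF s] assms(1,2) s unfolding good_def Gq_def by auto
  qed
  then show "T2 b k L p' q' x \<le> T2 b k L p q x" unfolding T2_def using S0_diff[OF c(2,4) assms(4)] by auto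
qed

end



lemma main:
  fixes a b L L0 :: real and \<phi>0 \<psi>0 \<phi>0' \<psi>0' \<phi>0'' \<psi>0'' :: "real \<Rightarrow> real"
  assumes a: "a > 0" and b: "b > 0" and L0: "0 < L0" "L0 \<le> L"
    and c0: "continuous_on {0..L0} \<phi>0" "continuous_on {0..L0} \<psi>0"
    and der: "\<forall>x\<in>{0<..<L0}. (\<phi>0 has_real_derivative \<phi>0' x) (at x) \<and> (\<psi>0 has_real_derivative \<psi>0' x) (at x) \<and>
       (\<phi>0' has_real_derivative \<phi>0'' x) (at x) \<and> (\<psi>0' has_real_derivative \<psi>0'' x) (at x) \<and>
       - \<phi>0'' x \<le> \<phi>0 x * (1 - \<phi>0 x - a * \<psi>0 x) \<and> - \<psi>0'' x \<ge> \<psi>0 x * (1 - b * \<phi>0 x - \<psi>0 x)"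
    and bd: "\<phi>0 0 = 0" "\<phi>0 L0 = 0" "\<psi>0 0 = 1" "\<psi>0 L0 = 1"
    and rng: "\<forall>x\<in>{0<..<L0}. 0 < \<phi>0 x \<and> \<phi>0 x < 1 \<and> 0 < \<psi>0 x \<and> \<psi>0 x < 1"
  shows "barrier_exists a b L"
proof -
  define k where "k = a + b + 2"
  have k: "k > 0" "a + 1 \<le> k^2" "b + 1 \<le> k^2"
  proof -
    have "k \<ge> 1" "k \<le> k^2" using a b by (auto simp: k_def power2_eq_square)
    then show "k > 0" "a + 1 \<le> k^2" "b + 1 \<le> k^2" using a b unfolding k_def by auto
  qed
  have L: "L > 0" using L0 by auto
  define p0 where "p0 = (\<lambda>x. \<phi>0 (min x L0))"
  define q0 where "q0 = (\<lambda>x. \<psi>0 (min x L0))"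
  have rng0: "0 \<le> \<phi>0 x \<and> \<phi>0 x \<le> 1 \<and> 0 \<le> \<psi>0 x \<and> \<psi>0 x \<le> 1" if "x \<in> {0..L0}" for x
  proof (cases "x = 0 \<or> x = L0")
    case True then show ?thesis using bd by auto
  next
    case False then have "x \<in> {0<..<L0}" using that by auto
    then have "0 < \<phi>0 x \<and> \<phi>0 x < 1 \<and> 0 < \<psi>0 x \<and> \<psi>0 x < 1" using rng by blast
    then show ?thesis by auto
  qed
  have g0: "good L p0 q0"
  proof -
    have im: "(\<lambda>x. min x L0) ` {0..L} \<subseteq> {0..L0}" using L0 by auto
    have cm: "continuous_on {0..L} (\<lambda>x. min x L0)" by (intro continuous_intros)
    show ?thesis unfolding good_def p0_def q0_def
      using continuous_on_compose2[OF c0(1) cm im] continuous_on_compose2[OF c0(2) cm im] rng0 im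
      by auto
  qed
  define stp where "stp = (\<lambda>pq. (T1 a k L (fst pq) (snd pq), T2 b k L (fst pq) (snd pq)))"
  define P where "P = (\<lambda>n. fst ((stp ^^ n) (p0, q0)))"
  define Q where "Q = (\<lambda>n. snd ((stp ^^ n) (p0, q0)))"
  have PQ0: "P 0 = p0" "Q 0 = q0" unfolding P_def Q_def by auto
  have PQS: "P (Suc n) = T1 a k L (P n) (Q n)" "Q (Suc n) = T2 b k L (P n) (Q n)" for n
    unfolding P_def Q_def stp_def by auto
  have gd: "good L (P n) (Q n)" for n
    by (induction n) (use g0 PQ0 PQS T_good[OF a b k L] in auto)
  have cF: "continuous_on {0..L} (Fp a (k^2) p0 q0)" "continuous_on {0..L} (Gq b (k^2) p0 q0)"
    using g0 unfolding good_def by (auto intro!: Fp_cont Gq_cont)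
  have gP1: "\<forall>x\<in>{0..L}. 0 \<le> P 1 x \<and> P 1 x \<le> 1 \<and> 0 \<le> Q 1 x \<and> Q 1 x \<le> 1" using gd[of 1] unfolding good_def by auto
  have cP1: "continuous_on {0..L} (P 1)" "continuous_on {0..L} (Q 1)" using gd[of 1] unfolding good_def by auto
  have P1: "P 1 = S0 k L (Fp a (k^2) p0 q0)" "Q 1 = (\<lambda>x. Hf k L x + S0 k L (Gq b (k^2) p0 q0) x)"
    using PQS[of 0] PQ0 unfolding T1_def T2_def by auto
  have pq0: "p0 y = \<phi>0 y" "q0 y = \<psi>0 y" if "y \<le> L0" for y using that unfolding p0_def q0_def by auto
  have baseL0: "\<forall>x\<in>{0..L0}. P 1 x - \<phi>0 x \<ge> 0"
  proof (rule maxp[of 0 L0 _ "k^2" "\<lambda>x. S0d k L (Fp a (k^2) p0 q0) x - \<phi>0' x"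
        "\<lambda>x. (k^2 * S0 k L (Fp a (k^2) p0 q0) x - Fp a (k^2) p0 q0 x) - \<phi>0'' x"])
    show "continuous_on {0..L0} (\<lambda>x. P 1 x - \<phi>0 x)"
      using cP1(1) c0(1) L0 by (intro continuous_intros) (auto elim!: continuous_on_subset)
    show "k^2 > 0" using k by auto
    show "0 \<le> P 1 0 - \<phi>0 0" using bd P1 by (simp add: S0_0)
    show "0 \<le> P 1 L0 - \<phi>0 L0" using bd gP1 L0 by auto
    show "\<forall>x\<in>{0<..<L0}. ((\<lambda>x. P 1 x - \<phi>0 x) has_real_derivative S0d k L (Fp a (k^2) p0 q0) x - \<phi>0' x) (at x) \<and>
       ((\<lambda>x. S0d k L (Fp a (k^2) p0 q0) x - \<phi>0' x) has_real_derivative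
          (k^2 * S0 k L (Fp a (k^2) p0 q0) x - Fp a (k^2) p0 q0 x) - \<phi>0'' x) (at x) \<and>
       (k^2 * S0 k L (Fp a (k^2) p0 q0) x - Fp a (k^2) p0 q0 x) - \<phi>0'' x \<le> k^2 * (P 1 x - \<phi>0 x)"
    proof
      fix y assume y: "y \<in> {0<..<L0}"
      then have yL: "y \<in> {0<..<L}" using L0 by auto
      note d = der[rule_format, OF y] and s = S0_ode[OF cF(1) yL k(1) L]
      have e: "Fp a (k^2) p0 q0 y = \<phi>0 y * (1 - \<phi>0 y - a * \<psi>0 y) + k^2 * \<phi>0 y"
        unfolding Fp_def using pq0[of y] y by auto
      show "((\<lambda>x. P 1 x - \<phi>0 x) has_real_derivative S0d k L (Fp a (k^2) p0 q0) y - \<phi>0' y) (at y) \<and>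
       ((\<lambda>x. S0d k L (Fp a (k^2) p0 q0) x - \<phi>0' x) has_real_derivative
          (k^2 * S0 k L (Fp a (k^2) p0 q0) y - Fp a (k^2) p0 q0 y) - \<phi>0'' y) (at y) \<and>
       (k^2 * S0 k L (Fp a (k^2) p0 q0) y - Fp a (k^2) p0 q0 y) - \<phi>0'' y \<le> k^2 * (P 1 y - \<phi>0 y)"
      proof (intro conjI)
        show "((\<lambda>x. P 1 x - \<phi>0 x) has_real_derivative S0d k L (Fp a (k^2) p0 q0) y - \<phi>0' y) (at y)"
          unfolding P1 by (rule DERIV_diff) (use s d in auto)
        show "((\<lambda>x. S0d k L (Fp a (k^2) p0 q0) x - \<phi>0' x) has_real_derivative
          (k^2 * S0 k L (Fp a (k^2) p0 q0) y - Fp a (k^2) p0 q0 y) - \<phi>0'' y) (at y)"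
          by (rule DERIV_diff) (use s d in auto)
        have "- \<phi>0'' y \<le> \<phi>0 y * (1 - \<phi>0 y - a * \<psi>0 y)" using d by auto
        then show "(k^2 * S0 k L (Fp a (k^2) p0 q0) y - Fp a (k^2) p0 q0 y) - \<phi>0'' y \<le> k^2 * (P 1 y - \<phi>0 y)"
          unfolding P1 e right_diff_distrib by linarith
      qed
    qed
  qed
  have baseQL0: "\<forall>x\<in>{0..L0}. \<psi>0 x - Q 1 x \<ge> 0"
  proof (rule maxp[of 0 L0 _ "k^2" "\<lambda>x. \<psi>0' x - (Hd k L x + S0d k L (Gq b (k^2) p0 q0) x)"
        "\<lambda>x. \<psi>0'' x - (k^2 * Hf k L x + (k^2 * S0 k L (Gq b (k^2) p0 q0) x - Gq b (k^2) p0 q0 x))"])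
    show "continuous_on {0..L0} (\<lambda>x. \<psi>0 x - Q 1 x)"
      using cP1(2) c0(2) L0 by (intro continuous_intros) (auto elim!: continuous_on_subset)
    show "k^2 > 0" using k by auto
    show "0 \<le> \<psi>0 0 - Q 1 0" using bd P1 k L by (simp add: S0_0 Hf_0)
    show "0 \<le> \<psi>0 L0 - Q 1 L0" using bd gP1 L0 by auto
    show "\<forall>x\<in>{0<..<L0}. ((\<lambda>x. \<psi>0 x - Q 1 x) has_real_derivative \<psi>0' x - (Hd k L x + S0d k L (Gq b (k^2) p0 q0) x)) (at x) \<and>
       ((\<lambda>x. \<psi>0' x - (Hd k L x + S0d k L (Gq b (k^2) p0 q0) x)) has_real_derivative
          \<psi>0'' x - (k^2 * Hf k L x + (k^2 * S0 k L (Gq b (k^2) p0 q0) x - Gq b (k^2) p0 q0 x))) (at x) \<and>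
       \<psi>0'' x - (k^2 * Hf k L x + (k^2 * S0 k L (Gq b (k^2) p0 q0) x - Gq b (k^2) p0 q0 x)) \<le> k^2 * (\<psi>0 x - Q 1 x)"
    proof
      fix y assume y: "y \<in> {0<..<L0}"
      then have yL: "y \<in> {0<..<L}" using L0 by auto
      note d = der[rule_format, OF y] and s = S0_ode[OF cF(2) yL k(1) L]
      have e: "Gq b (k^2) p0 q0 y = \<psi>0 y * (1 - b * \<phi>0 y - \<psi>0 y) + k^2 * \<psi>0 y"
        unfolding Gq_def using pq0[of y] y by auto
      show "((\<lambda>x. \<psi>0 x - Q 1 x) has_real_derivative \<psi>0' y - (Hd k L y + S0d k L (Gq b (k^2) p0 q0) y)) (at y) \<and>
       ((\<lambda>x. \<psi>0' x - (Hd k L x + S0d k L (Gq b (k^2) p0 q0) x)) has_real_derivative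
          \<psi>0'' y - (k^2 * Hf k L y + (k^2 * S0 k L (Gq b (k^2) p0 q0) y - Gq b (k^2) p0 q0 y))) (at y) \<and>
       \<psi>0'' y - (k^2 * Hf k L y + (k^2 * S0 k L (Gq b (k^2) p0 q0) y - Gq b (k^2) p0 q0 y)) \<le> k^2 * (\<psi>0 y - Q 1 y)"
      proof (intro conjI)
        show "((\<lambda>x. \<psi>0 x - Q 1 x) has_real_derivative \<psi>0' y - (Hd k L y + S0d k L (Gq b (k^2) p0 q0) y)) (at y)"
          unfolding P1 by (intro DERIV_diff DERIV_add Hf_deriv) (use s d in auto)
        show "((\<lambda>x. \<psi>0' x - (Hd k L x + S0d k L (Gq b (k^2) p0 q0) x)) has_real_derivative
          \<psi>0'' y - (k^2 * Hf k L y + (k^2 * S0 k L (Gq b (k^2) p0 q0) y - Gq b (k^2) p0 q0 y))) (at y)"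
          by (intro DERIV_diff DERIV_add Hd_deriv) (use s d in auto)
        have "- \<psi>0'' y \<ge> \<psi>0 y * (1 - b * \<phi>0 y - \<psi>0 y)" using d by auto
        then show "\<psi>0'' y - (k^2 * Hf k L y + (k^2 * S0 k L (Gq b (k^2) p0 q0) y - Gq b (k^2) p0 q0 y)) \<le> k^2 * (\<psi>0 y - Q 1 y)"
          unfolding P1 e right_diff_distrib distrib_left by linarith
      qed
    qed
  qed
  have base: "P 0 x \<le> P 1 x \<and> Q 1 x \<le> Q 0 x" if x: "x \<in> {0..L}" for x
  proof (cases "x \<le> L0")
    case True then show ?thesis using baseL0 baseQL0 x pq0 PQ0 by auto
  next
    case False
    then have "P 0 x = 0" "Q 0 x = 1" using PQ0 bd unfolding p0_def q0_def by auto
    then show ?thesis using gP1 x by auto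
  qed
  have mono: "\<forall>x\<in>{0..L}. P n x \<le> P (Suc n) x \<and> Q (Suc n) x \<le> Q n x" for n
  proof (induction n)
    case 0 then show ?case using base by auto
  next
    case (Suc n)
    show ?case
    proof
      fix x assume x: "x \<in> {0..L}"
      show "P (Suc n) x \<le> P (Suc (Suc n)) x \<and> Q (Suc (Suc n)) x \<le> Q (Suc n) x"
        unfolding PQS(1)[of "Suc n"] PQS(2)[of "Suc n"] PQS(1)[of n] PQS(2)[of n]
        using T_mono[OF a b k L gd[of n] gd[of "Suc n"] _ x] Suc.IH PQS by auto
    qed
  qed
  define p where "p = (\<lambda>x. SUP n. P n x)"
  define q where "q = (\<lambda>x. INF n. Q n x)"
  have limp: "(\<lambda>n. P n x) \<longlonglongrightarrow> p x" and limq: "(\<lambda>n. Q n x) \<longlonglongrightarrow> q x"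
    and incp: "incseq (\<lambda>n. P n x)" and decq: "decseq (\<lambda>n. Q n x)" if x: "x \<in> {0..L}" for x
  proof -
    show inc: "incseq (\<lambda>n. P n x)" using mono x by (intro incseq_SucI) auto
    show dec: "decseq (\<lambda>n. Q n x)" using mono x by (intro decseq_SucI) auto
    have "bdd_above (range (\<lambda>n. P n x))" using gd x unfolding good_def by (intro bdd_aboveI2[of _ _ 1]) auto
    then show "(\<lambda>n. P n x) \<longlonglongrightarrow> p x" unfolding p_def using LIMSEQ_incseq_SUP inc by blast
    have "bdd_below (range (\<lambda>n. Q n x))" using gd x unfolding good_def by (intro bdd_belowI2[of _ 0]) auto
    then show "(\<lambda>n. Q n x) \<longlonglongrightarrow> q x" unfolding q_def using LIMSEQ_decseq_INF dec by blast
  qed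
  have rngpq: "0 \<le> p x \<and> p x \<le> 1 \<and> 0 \<le> q x \<and> q x \<le> 1" and pge: "P 0 x \<le> p x"
    if x: "x \<in> {0..L}" for x
  proof -
    have b: "0 \<le> P n x \<and> P n x \<le> 1 \<and> 0 \<le> Q n x \<and> Q n x \<le> 1" for n using gd[of n] x unfolding good_def by auto
    show "P 0 x \<le> p x" using incseq_le[OF incp[OF x] limp[OF x]] by auto
    have "0 \<le> p x" using LIMSEQ_le_const[OF limp[OF x], of 0] b by auto
    moreover have "p x \<le> 1" using LIMSEQ_le_const2[OF limp[OF x], of 1] b by auto
    moreover have "0 \<le> q x" using LIMSEQ_le_const[OF limq[OF x], of 0] b by auto
    moreover have "q x \<le> 1" using LIMSEQ_le_const2[OF limq[OF x], of 1] b by auto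
    ultimately show "0 \<le> p x \<and> p x \<le> 1 \<and> 0 \<le> q x \<and> q x \<le> 1" by auto
  qed
  have cFn: "continuous_on {0..L} (Fp a (k^2) (P n) (Q n))" "continuous_on {0..L} (Gq b (k^2) (P n) (Q n))" for n
    using gd[of n] unfolding good_def by (auto intro!: Fp_cont Gq_cont)
  have bFn: "\<bar>Fp a (k^2) (P n) (Q n) s\<bar> \<le> k^2" "\<bar>Gq b (k^2) (P n) (Q n) s\<bar> \<le> k^2" if "s \<in> {0..L}" for n s
  proof -
    show "\<bar>Fp a (k^2) (P n) (Q n) s\<bar> \<le> k^2" using Fp_b[OF a b k L gd[of n] that] by auto
    have "0 \<le> b * P n s" using b gd[of n] that unfolding good_def by auto
    then show "\<bar>Gq b (k^2) (P n) (Q n) s\<bar> \<le> k^2" using Gq_b[OF a b k L gd[of n] that] by auto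
  qed
  have lFn: "(\<lambda>n. Fp a (k^2) (P n) (Q n) s) \<longlonglongrightarrow> Fp a (k^2) p q s"
     "(\<lambda>n. Gq b (k^2) (P n) (Q n) s) \<longlonglongrightarrow> Gq b (k^2) p q s" if "s \<in> {0..L}" for s
    unfolding Fp_def Gq_def using limp[OF that] limq[OF that] by (auto intro!: tendsto_intros)
  have SL1: "continuous_on {0..L} (S0 k L (Fp a (k^2) p q))"
    "\<And>x. x \<in> {0..L} \<Longrightarrow> (\<lambda>n. S0 k L (Fp a (k^2) (P n) (Q n)) x) \<longlonglongrightarrow> S0 k L (Fp a (k^2) p q) x"
    using S0_lim[of k L "\<lambda>n. Fp a (k^2) (P n) (Q n)" "k^2" "Fp a (k^2) p q"] k(1) L cFn(1) bFn(1) lFn(1)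
    by auto
  have SL2: "continuous_on {0..L} (S0 k L (Gq b (k^2) p q))"
    "\<And>x. x \<in> {0..L} \<Longrightarrow> (\<lambda>n. S0 k L (Gq b (k^2) (P n) (Q n)) x) \<longlonglongrightarrow> S0 k L (Gq b (k^2) p q) x"
    using S0_lim[of k L "\<lambda>n. Gq b (k^2) (P n) (Q n)" "k^2" "Gq b (k^2) p q"] k(1) L cFn(2) bFn(2) lFn(2)
    by auto
  have peq: "p x = S0 k L (Fp a (k^2) p q) x" and qeq: "q x = Hf k L x + S0 k L (Gq b (k^2) p q) x"
    if x: "x \<in> {0..L}" for x
  proof -
    have "(\<lambda>n. P (Suc n) x) \<longlonglongrightarrow> S0 k L (Fp a (k^2) p q) x" unfolding PQS T1_def using SL1(2)[OF x] by simp
    then show "p x = S0 k L (Fp a (k^2) p q) x" using LIMSEQ_unique LIMSEQ_Suc[OF limp[OF x]] by blast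
    have "(\<lambda>n. Q (Suc n) x) \<longlonglongrightarrow> Hf k L x + S0 k L (Gq b (k^2) p q) x" unfolding PQS T2_def
      using SL2(2)[OF x] by (auto intro!: tendsto_intros)
    then show "q x = Hf k L x + S0 k L (Gq b (k^2) p q) x" using LIMSEQ_unique LIMSEQ_Suc[OF limq[OF x]] by blast
  qed
  have gpq: "good L p q"
  proof -
    have "continuous_on {0..L} p" using continuous_on_cong[THEN iffD2, OF refl _ SL1(1)] peq by blast
    moreover have "continuous_on {0..L} q"
      using continuous_on_cong[THEN iffD2, OF refl _ continuous_on_add[OF Hf_cont SL2(1)]] qeq by blast
    ultimately show ?thesis unfolding good_def using rngpq by auto
  qed
  define \<phi> where "\<phi> = S0 k L (Fp a (k^2) p q)"
  define \<psi> where "\<psi> = (\<lambda>x. Hf k L x + S0 k L (Gq b (k^2) p q) x)"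
  have cpq: "continuous_on {0..L} (Fp a (k^2) p q)" "continuous_on {0..L} (Gq b (k^2) p q)"
    using gpq unfolding good_def by (auto intro!: Fp_cont Gq_cont)
  have s0: "L0 / 2 \<in> {0<..<L}" "L0 / 2 \<in> {0<..<L0}" using L0 by auto
  have ps0: "p (L0 / 2) > 0"
  proof -
    have "P 0 (L0 / 2) = \<phi>0 (L0 / 2)" using PQ0 pq0[of "L0/2"] L0 by auto
    moreover have "\<phi>0 (L0 / 2) > 0" using rng s0(2) by blast
    ultimately show ?thesis using pge[of "L0/2"] s0 by auto
  qed
  have "barrier a b L \<phi> \<psi>"
    unfolding barrier_def
  proof (intro conjI)
    show "continuous_on {0..L} \<phi>" unfolding \<phi>_def by (rule SL1(1))
    show "continuous_on {0..L} \<psi>" unfolding \<psi>_def by (intro continuous_intros Hf_cont SL2(1))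
    show "\<phi> 0 = 0" "\<phi> L = 0" unfolding \<phi>_def by (auto simp: S0_0 S0_L)
    show "\<psi> 0 = 1" "\<psi> L = 1" unfolding \<psi>_def using k(1) L by (auto simp: S0_0 S0_L Hf_0 Hf_L)
    show "\<exists>\<phi>' \<psi>' \<phi>'' \<psi>''. \<forall>x\<in>{0<..<L}.
        (\<phi> has_real_derivative \<phi>' x) (at x) \<and> (\<psi> has_real_derivative \<psi>' x) (at x) \<and>
        (\<phi>' has_real_derivative \<phi>'' x) (at x) \<and> (\<psi>' has_real_derivative \<psi>'' x) (at x) \<and>
        - \<phi>'' x = \<phi> x * (1 - \<phi> x - a * \<psi> x) \<and> - \<psi>'' x = \<psi> x * (1 - b * \<phi> x - \<psi> x)"
    proof (intro exI ballI conjI)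
      fix x assume x: "x \<in> {0<..<L}"
      then have x': "x \<in> {0..L}" by auto
      note s1 = S0_ode[OF cpq(1) x k(1) L] and s2 = S0_ode[OF cpq(2) x k(1) L]
      show "(\<phi> has_real_derivative S0d k L (Fp a (k^2) p q) x) (at x)" unfolding \<phi>_def by (rule s1(1))
      show "(S0d k L (Fp a (k^2) p q) has_real_derivative k^2 * S0 k L (Fp a (k^2) p q) x - Fp a (k^2) p q x) (at x)"
        by (rule s1(2))
      show "(\<psi> has_real_derivative Hd k L x + S0d k L (Gq b (k^2) p q) x) (at x)" unfolding \<psi>_def
        by (intro DERIV_add Hf_deriv s2(1))
      show "((\<lambda>x. Hd k L x + S0d k L (Gq b (k^2) p q) x) has_real_derivative
          k^2 * Hf k L x + (k^2 * S0 k L (Gq b (k^2) p q) x - Gq b (k^2) p q x)) (at x)"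
        by (intro DERIV_add Hd_deriv s2(2))
      have e1: "\<phi> x = p x" "\<psi> x = q x" unfolding \<phi>_def \<psi>_def using peq[OF x'] qeq[OF x'] by auto
      show "- (k^2 * S0 k L (Fp a (k^2) p q) x - Fp a (k^2) p q x) = \<phi> x * (1 - \<phi> x - a * \<psi> x)"
        using e1 unfolding Fp_def \<phi>_def[symmetric] by (simp add: algebra_simps)
      show "- (k^2 * Hf k L x + (k^2 * S0 k L (Gq b (k^2) p q) x - Gq b (k^2) p q x)) = \<psi> x * (1 - b * \<phi> x - \<psi> x)"
      proof -
        have "k^2 * Hf k L x + k^2 * S0 k L (Gq b (k^2) p q) x = k^2 * \<psi> x" unfolding \<psi>_def by (simp add: algebra_simps)
        then show ?thesis using e1 unfolding Gq_def by (simp add: algebra_simps)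
      qed
    qed
    show "\<forall>x\<in>{0<..<L}. 0 < \<phi> x \<and> \<phi> x < 1 \<and> 0 < \<psi> x \<and> \<psi> x < 1"
    proof
      fix x assume x: "x \<in> {0<..<L}"
      then have x': "x \<in> {0..L}" by auto
      have H: "Hf k L x > 0" using Hf_pos[OF k(1) L x'] .
      show "0 < \<phi> x \<and> \<phi> x < 1 \<and> 0 < \<psi> x \<and> \<psi> x < 1"
      proof (intro conjI)
        show "0 < \<phi> x" unfolding \<phi>_def
        proof (rule S0_pos[OF cpq(1) x k(1) L _ s0(1)])
          show "\<And>s. s \<in> {0..L} \<Longrightarrow> 0 \<le> Fp a (k^2) p q s" using Fp_b[OF a b k L gpq] by auto
          show "0 < Fp a (k^2) p q (L0 / 2)" using Fp_b(3)[OF a b k L gpq _ ps0] s0 by auto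
        qed
        show "\<phi> x < 1" using T1_le[OF a b k L gpq x'] H unfolding T1_def \<phi>_def by auto
        have "S0 k L (Gq b (k^2) p q) x \<ge> 0" using Gq_b[OF a b k L gpq] by (intro S0_nonneg cpq(2) x' k(1) L) auto
        then show "0 < \<psi> x" unfolding \<psi>_def using H by auto
        have "S0 k L (\<lambda>s. k^2 - Gq b (k^2) p q s) x > 0"
        proof (rule S0_pos[OF _ x k(1) L _ s0(1)])
          show "continuous_on {0..L} (\<lambda>s. k^2 - Gq b (k^2) p q s)" by (intro continuous_intros cpq(2))
          have bp: "0 \<le> b * p s" if "s \<in> {0..L}" for s using b rngpq[OF that] by auto
          show "\<And>s. s \<in> {0..L} \<Longrightarrow> 0 \<le> k^2 - Gq b (k^2) p q s"
            using Gq_b(2)[OF a b k L gpq] bp by (smt (verit))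
          have "0 < b * p (L0/2)" using b ps0 by auto
          then show "0 < k^2 - Gq b (k^2) p q (L0 / 2)" using Gq_b(2)[OF a b k L gpq, of "L0/2"] s0 by auto
        qed
        then show "\<psi> x < 1" unfolding \<psi>_def
          using S0_diff[of L "\<lambda>_. k^2" "Gq b (k^2) p q" x k] cpq(2) x' S0_const[OF k(1) L x'] by auto
      qed
    qed
  qed
  then show ?thesis unfolding barrier_exists_def by blast
qed



theorem proposition1:
  fixes a0 b0 L0 :: real
  assumes "a0 > 0" and "b0 > max a0 1" and "L0 > 0"
    and "barrier_exists a0 b0 L0"
  shows "(\<forall>L\<ge>L0. barrier_exists a0 b0 L)
       \<and> (\<forall>b\<ge>b0. barrier_exists a0 b L0)
       \<and> (\<forall>a. 0 < a \<and> a \<le> a0 \<longrightarrow> barrier_exists a b0 L0)"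
proof -
  obtain \<phi> \<psi> where B: "barrier a0 b0 L0 \<phi> \<psi>" using assms(4) unfolding barrier_exists_def by blast
  then obtain \<phi>' \<psi>' \<phi>'' \<psi>'' where
    c: "continuous_on {0..L0} \<phi>" "continuous_on {0..L0} \<psi>" and
    d: "\<forall>x\<in>{0<..<L0}.
           (\<phi> has_real_derivative \<phi>' x) (at x) \<and>
           (\<psi> has_real_derivative \<psi>' x) (at x) \<and>
           (\<phi>' has_real_derivative \<phi>'' x) (at x) \<and>
           (\<psi>' has_real_derivative \<psi>'' x) (at x) \<and>
           - \<phi>'' x = \<phi> x * (1 - \<phi> x - a0 * \<psi> x) \<and>
           - \<psi>'' x = \<psi> x * (1 - b0 * \<phi> x - \<psi> x)" and
    bd: "\<phi> 0 = 0" "\<phi> L0 = 0" "\<psi> 0 = 1" "\<psi> L0 = 1" and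
    r: "\<forall>x\<in>{0<..<L0}. 0 < \<phi> x \<and> \<phi> x < 1 \<and> 0 < \<psi> x \<and> \<psi> x < 1"
    unfolding barrier_def by blast
  have b0: "b0 > 0" using assms(2) by auto
  have P: "barrier_exists a b L" if ab: "0 < a" "a \<le> a0" "b0 \<le> b" "L0 \<le> L" for a b L
  proof (rule main[of a b L0 L \<phi> \<psi> \<phi>' \<psi>' \<phi>'' \<psi>''])
    show "0 < a" "0 < b" "0 < L0" "L0 \<le> L" using ab b0 assms(3) by auto
    show "\<forall>x\<in>{0<..<L0}. (\<phi> has_real_derivative \<phi>' x) (at x) \<and> (\<psi> has_real_derivative \<psi>' x) (at x) \<and>
       (\<phi>' has_real_derivative \<phi>'' x) (at x) \<and> (\<psi>' has_real_derivative \<psi>'' x) (at x) \<and>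
       - \<phi>'' x \<le> \<phi> x * (1 - \<phi> x - a * \<psi> x) \<and> - \<psi>'' x \<ge> \<psi> x * (1 - b * \<phi> x - \<psi> x)"
    proof
      fix x assume x: "x \<in> {0<..<L0}"
      note dx = d[rule_format, OF x] and rx = r[rule_format, OF x]
      have "\<phi> x * (1 - \<phi> x - a0 * \<psi> x) \<le> \<phi> x * (1 - \<phi> x - a * \<psi> x)"
      proof -
        have "\<phi> x * \<psi> x * (a0 - a) \<ge> 0" using rx ab by auto
        then show ?thesis by (simp add: algebra_simps)
      qed
      moreover have "\<psi> x * (1 - b * \<phi> x - \<psi> x) \<le> \<psi> x * (1 - b0 * \<phi> x - \<psi> x)"
      proof -
        have "\<phi> x * \<psi> x * (b - b0) \<ge> 0" using rx ab by auto
        then show ?thesis by (simp add: algebra_simps)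
      qed
      ultimately show "(\<phi> has_real_derivative \<phi>' x) (at x) \<and> (\<psi> has_real_derivative \<psi>' x) (at x) \<and>
       (\<phi>' has_real_derivative \<phi>'' x) (at x) \<and> (\<psi>' has_real_derivative \<psi>'' x) (at x) \<and>
       - \<phi>'' x \<le> \<phi> x * (1 - \<phi> x - a * \<psi> x) \<and> - \<psi>'' x \<ge> \<psi> x * (1 - b * \<phi> x - \<psi> x)"
        using dx by auto
    qed
  qed (use c bd r in auto)
  show ?thesis using P assms(1) by auto
qed


end
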